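(* Let $\Sigma:\ \dot x=-ZB\mathcal{K}(x^* )B^T\mathrm{Exp}\big(Z^T\mathrm{Ln}(\tfrac{x}{x^*})\big)$ be a balanced mass action chemical reaction network with thermodynamic equilibrium $x^*\in\mathbb{R}^m_+$, and let $\hat\Sigma:\ \dot x=-\hat Z\hat B\hat{\mathcal{K}}(x^* )\hat B^T\mathrm{Exp}\big(\hat Z^T\mathrm{Ln}(\tfrac{x}{x^*})\big)$ be its reduced-order model obtained by deleting a subset $\mathcal{V}_r$ of complexes (as described in the context). Denote by $\mathcal{E}$ and $\hat{\mathcal{E}}$ the sets of equilibria (points $x\in\mathbb{R}^m_+$ where the right-hand side vanishes) of $\Sigma$ and $\hat\Sigma$, respectively. Then $\mathcal{E}\subset\hat{\mathcal{E}}$. Furthermore, if $\Sigma$ has deficiency zero then so does $\hat\Sigma$.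
   Context: Network $\Sigma$: $m$ species with concentrations $x\in\mathbb{R}^m_+$, $c$ complexes, $r$ reactions. $Z$ ($m\times c$) has as $\rho$-th column the species composition of complex $\rho$. The complex graph has the complexes as vertices and for each reaction $j$ an edge from its substrate complex $\mathcal{S}_j$ to its product complex $\mathcal{P}_j$; $B$ is its $c\times r$ incidence matrix ($-1$ at tail, $+1$ at head). Mass action rates $v_j(x)=k_j^{\mathrm{forw}}\exp(Z_{\mathcal{S}_j}^T\mathrm{Ln}(x))-k_j^{\mathrm{rev}}\exp(Z_{\mathcal{P}_j}^T\mathrm{Ln}(x))$; $x^*$ with $v(x^* )=0$ is a thermodynamic equilibrium; balanced reaction constants $\kappa_j(x^* )=k_j^{\mathrm{forw}}\exp(Z_{\mathcal{S}_j}^T\mathrm{Ln}(x^* ))>0$, $\mathcal{K}(x^* )=\mathrm{diag}(\kappa_j(x^* ))$, so that $ZBv(x)=-ZB\mathcal{K}(x^* )B^T\mathrm{Exp}(Z^T\mathrm{Ln}(x/x^* ))$. Reduction: let $L:=B\mathcal{K}(x^* )B^T$ (a symmetric weighted Laplacian of the complex graph). Choose a subset $\mathcal{V}_r$ of complexes to delete and, after permuting the complexes so that $\mathcal{V}_r$ comes last, partition $L=\begin{bmatrix}L_{11}&L_{12}\\L_{21}&L_{22}\end{bmatrix}$ and $Z=\begin{bmatrix}Z_1&Z_2\end{bmatrix}$ accordingly, with $L_{22}$ invertible. The Schur complement $\hat L:=L_{11}-L_{12}L_{22}^{-1}L_{21}$ is the weighted Laplacian $\hat B\hat{\mathcal{K}}(x^*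 )\hat B^T$ of a directed graph on the remaining complexes, with incidence matrix $\hat B$ and positive diagonal weight matrix $\hat{\mathcal{K}}(x^* )$; set $\hat Z:=Z_1$. The deficiency of a network with complex stoichiometric matrix $Z$ and incidence matrix $B$ is $\operatorname{rank}B-\operatorname{rank}ZB$; deficiency zero means this equals $0$ (equivalently $\ker Z\cap\operatorname{im}B=0$). $\mathrm{Ln},\mathrm{Exp}$ are componentwise logarithm/exponential, $x/x^*$ the componentwise quotient. *)

theory Defs
  imports "Jordan_Normal_Form.DL_Rank" "Jordan_Normal_Form.DL_Submatrix"
begin

definition incidence_mat :: "nat \<Rightarrow> nat \<Rightarrow> (nat \<Rightarrow> nat) \<Rightarrow> (nat \<Rightarrow> nat) \<Rightarrow> real mat" where
  "incidence_mat c r S P = mat c r (\<lambda>(i,j). (if i = P j then 1 else 0) - (if i = S j then 1 else 0))"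

definition Ln_vec :: "real vec \<Rightarrow> real vec" where
  "Ln_vec x = map_vec ln x"

definition Exp_vec :: "real vec \<Rightarrow> real vec" where
  "Exp_vec x = map_vec exp x"

definition vec_quot :: "real vec \<Rightarrow> real vec \<Rightarrow> real vec" where
  "vec_quot x y = vec (dim_vec x) (\<lambda>i. x $ i / y $ i)"

definition pos_vec :: "nat \<Rightarrow> real vec \<Rightarrow> bool" where
  "pos_vec n x \<longleftrightarrow> dim_vec x = n \<and> (\<forall>i<n. x $ i > 0)"

text \<open>mass action rate of reaction j (substrate complex S j, product complex P j)\<close>
definition mass_action_rate ::
  "real mat \<Rightarrow> (nat \<Rightarrow> nat) \<Rightarrow> (nat \<Rightarrow> nat) \<Rightarrow> (nat \<Rightarrow> real) \<Rightarrow> (nat \<Rightarrow> real) \<Rightarrow> real vec \<Rightarrow> nat \<Rightarrow> real" where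
  "mass_action_rate Z S P kf kr x j =
     kf j * exp (col Z (S j) \<bullet> Ln_vec x) - kr j * exp (col Z (P j) \<bullet> Ln_vec x)"

definition balanced_rhs :: "real mat \<Rightarrow> real mat \<Rightarrow> (nat \<Rightarrow> real) \<Rightarrow> real vec \<Rightarrow> real vec \<Rightarrow> real vec" where
  "balanced_rhs Z B \<kappa> xs x =
     - (Z * B * mat_diag (dim_col B) \<kappa> * transpose_mat B) *\<^sub>v Exp_vec (transpose_mat Z *\<^sub>v Ln_vec (vec_quot x xs))"

definition equilibria :: "nat \<Rightarrow> real mat \<Rightarrow> real mat \<Rightarrow> (nat \<Rightarrow> real) \<Rightarrow> real vec \<Rightarrow> real vec set" where
  "equilibria m Z B \<kappa> xs = {x. pos_vec m x \<and> balanced_rhs Z B \<kappa> xs x = 0\<^sub>v m}"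

definition mat_rank :: "real mat \<Rightarrow> nat" where
  "mat_rank A = vec_space.rank (dim_row A) A"

definition deficiency :: "real mat \<Rightarrow> real mat \<Rightarrow> int" where
  "deficiency Z B = int (mat_rank B) - int (mat_rank (Z * B))"

end

theory Submission
  imports Defs
begin

lemma (in vectorspace) fin_dim_subspace:
  assumes fd: "fin_dim" and X: "VectorSpace.subspace K X V"
  shows "vectorspace.fin_dim K (vs X)"
proof -
  interpret X: vectorspace K "vs X" using X by (rule subspace_is_vs)
  have XC: "X \<subseteq> carrier V" using X unfolding VectorSpace.subspace_def submodule_def by auto
  have small: "\<And>A. A \<subseteq> carrier (vs X) \<and> X.lin_indpt A \<Longrightarrow> finite A \<and> card A \<le> dim"
  proof -
    fix A assume a: "A \<subseteq> carrier (vs X) \<and> X.lin_indpt A"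
    then have "lin_indpt A" using span_li_not_depend(2)[of A X] X XC by auto
    then show "finite A \<and> card A \<le> dim" using li_le_dim[OF fd] a XC by auto
  qed
  have "\<exists>A. finite A \<and> maximal A (\<lambda>S. S \<subseteq> carrier (vs X) \<and> X.lin_indpt S)"
    apply (rule maximal_exists[where N=dim and B="{}"])
    using small apply blast
    by (auto simp: X.lin_dep_def)
  then obtain A where A: "finite A" "maximal A (\<lambda>S. S \<subseteq> carrier (vs X) \<and> X.lin_indpt S)" by blast
  then have "X.basis A" by (intro X.max_li_is_basis) auto
  then show ?thesis using A(1) unfolding X.fin_dim_def X.basis_def by auto
qed

lemma (in vectorspace) dim0_trivial:
  assumes fd: "fin_dim" and d: "dim = 0"
  shows "carrier V = {\<zero>\<^bsub>V\<^esub>}"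
proof -
  obtain b where b: "basis b" using finite_basis_exists[OF fd] by blast
  have "finite b" using b fd basis_def li_le_dim(1) by blast
  then have "card b = 0" using dim_basis b d by auto
  then have "b = {}" using \<open>finite b\<close> by auto
  then show ?thesis using b unfolding basis_def using span_empty by auto
qed

definition CS :: "real mat \<Rightarrow> real vec set" where
  "CS A = {A *\<^sub>v x | x. x \<in> carrier_vec (dim_col A)}"

lemma span_cols_CS:
  assumes A: "A \<in> carrier_mat n k"
  shows "LinearCombinations.module.span class_ring (module_vec TYPE(real) n) (set (cols A)) = CS A"
proof -
  interpret Vn: vec_space "TYPE(real)" n .
  show ?thesis using Vn.col_space_eq[OF A] A unfolding Vn.col_space_def CS_def by auto
qed

lemma rank_mult_nullity:
  fixes A M :: "real mat"
  assumes A: "A \<in> carrier_mat n k" and M: "M \<in> carrier_mat p n"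
  shows "vec_space.rank p (M*A) \<le> vec_space.rank n A"
   and "vec_space.rank p (M*A) = vec_space.rank n A \<longleftrightarrow> (\<forall>v \<in> CS A. M *\<^sub>v v = 0\<^sub>v p \<longrightarrow> v = 0\<^sub>v n)"
proof -
  interpret Vn: vec_space "TYPE(real)" n .
  interpret Vp: vec_space "TYPE(real)" p .
  define S where "S = Vn.span (set (cols A))"
  have S: "S = CS A" unfolding S_def by (rule span_cols_CS[OF A])
  have colsA: "set (cols A) \<subseteq> carrier_vec n" using A cols_dim carrier_matD(1) by blast
  have sub: "VectorSpace.subspace class_ring S Vn.V" unfolding S_def using Vn.span_is_subspace colsA by auto
  interpret VV: vectorspace class_ring "Vn.vs S" using Vn.subspace_is_vs[OF sub] .
  have fdVV: "VV.fin_dim" using Vn.fin_dim_span_cols[OF A] unfolding S_def .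
  have SC: "S \<subseteq> carrier_vec n" using S A unfolding CS_def by auto
  interpret LM: linear_map class_ring "Vn.vs S" Vp.V "\<lambda>v. M *\<^sub>v v"
  proof (unfold_locales)
    show "(\<lambda>v. M *\<^sub>v v) \<in> LinearCombinations.module_hom class_ring (Vn.vs S) Vp.V"
      unfolding LinearCombinations.module_hom_def using SC M
      by (auto simp: module_vec_simps intro!: mult_add_distrib_mat_vec[OF M] mult_mat_vec[OF M])
  qed
  have rn: "vectorspace.dim class_ring (Vp.vs LM.imT) + vectorspace.dim class_ring (VV.vs LM.kerT) = VV.dim"
    by (rule LM.rank_nullity[OF fdVV])
  have dimV: "VV.dim = vec_space.rank n A" unfolding Vn.rank_def S_def by simp
  have mh: "mod_hom class_ring (Vn.vs S) Vp.V (\<lambda>v. M *\<^sub>v v)"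
    using LM.linear_map_axioms unfolding linear_map_def by blast
  have im: "LM.imT = Vp.span (set (cols (M*A)))"
  proof -
    have "LM.imT = (\<lambda>v. M *\<^sub>v v) ` CS A" unfolding mod_hom.im_def[OF mh] by (simp add: S)
    also have "\<dots> = CS (M*A)"
    proof -
      have "\<And>x. x \<in> carrier_vec k \<Longrightarrow> M *\<^sub>v (A *\<^sub>v x) = (M * A) *\<^sub>v x"
        using A M by (simp add: assoc_mult_mat_vec)
      note eq = this
      have dc: "dim_col (M*A) = dim_col A" using A M by simp
      show ?thesis unfolding CS_def dc
      proof (intro equalityI subsetI)
        fix y assume "y \<in> (*\<^sub>v) M ` {A *\<^sub>v x |x. x \<in> carrier_vec (dim_col A)}"
        then obtain x where "x \<in> carrier_vec (dim_col A)" "y = M *\<^sub>v (A *\<^sub>v x)" by blast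
        then show "y \<in> {M * A *\<^sub>v x |x. x \<in> carrier_vec (dim_col A)}" using eq A by auto
      next
        fix y assume "y \<in> {M * A *\<^sub>v x |x. x \<in> carrier_vec (dim_col A)}"
        then obtain x where "x \<in> carrier_vec (dim_col A)" "y = M * A *\<^sub>v x" by blast
        then show "y \<in> (*\<^sub>v) M ` {A *\<^sub>v x |x. x \<in> carrier_vec (dim_col A)}" using eq A
          by (intro image_eqI[of _ _ "A *\<^sub>v x"]) auto
      qed
    qed
    also have "\<dots> = Vp.span (set (cols (M*A)))"
      using span_cols_CS[of "M*A" p k] A M by simp
    finally show ?thesis .
  qed
  have dimW: "vectorspace.dim class_ring (Vp.vs LM.imT) = vec_space.rank p (M*A)"
    unfolding Vp.rank_def im by simp
  have ker: "LM.kerT = {v \<in> S. M *\<^sub>v v = 0\<^sub>v p}" unfolding mod_hom.ker_def[OF mh] by simp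
  show "vec_space.rank p (M*A) \<le> vec_space.rank n A" using rn dimV dimW by linarith
  have kersub: "VectorSpace.subspace class_ring LM.kerT (Vn.vs S)" by (rule LM.kerT_is_subspace)
  have fdK: "vectorspace.fin_dim class_ring (VV.vs LM.kerT)" by (rule VV.fin_dim_subspace[OF fdVV kersub])
  interpret KK: vectorspace class_ring "VV.vs LM.kerT" by (rule VV.subspace_is_vs[OF kersub])
  show "vec_space.rank p (M*A) = vec_space.rank n A \<longleftrightarrow> (\<forall>v \<in> CS A. M *\<^sub>v v = 0\<^sub>v p \<longrightarrow> v = 0\<^sub>v n)"
  proof
    assume eq: "vec_space.rank p (M*A) = vec_space.rank n A"
    then have "KK.dim = 0" using rn dimV dimW by linarith
    then have "carrier (VV.vs LM.kerT) = {\<zero>\<^bsub>VV.vs LM.kerT\<^esub>}" by (rule KK.dim0_trivial[OF fdK])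
    then have k0: "LM.kerT = {0\<^sub>v n}" by simp
    show "\<forall>v \<in> CS A. M *\<^sub>v v = 0\<^sub>v p \<longrightarrow> v = 0\<^sub>v n"
    proof (intro ballI impI)
      fix v assume "v \<in> CS A" "M *\<^sub>v v = 0\<^sub>v p"
      then have "v \<in> LM.kerT" using ker S by blast
      then show "v = 0\<^sub>v n" using k0 by blast
    qed
  next
    assume inj: "\<forall>v \<in> CS A. M *\<^sub>v v = 0\<^sub>v p \<longrightarrow> v = 0\<^sub>v n"
    have "inj_on (\<lambda>v. M *\<^sub>v v) (carrier (Vn.vs S))"
    proof (rule inj_onI)
      fix x y assume x: "x \<in> carrier (Vn.vs S)" and y: "y \<in> carrier (Vn.vs S)" and e: "M *\<^sub>v x = M *\<^sub>v y"
      have "x \<in> CS A" "y \<in> CS A" using x y S by auto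
      then obtain a b where a: "a \<in> carrier_vec k" "x = A *\<^sub>v a" and b: "b \<in> carrier_vec k" "y = A *\<^sub>v b"
        unfolding CS_def using A by auto
      have dxy: "x - y = A *\<^sub>v (a - b)" using a b A by (simp add: mult_minus_distrib_mat_vec)
      have d: "x - y \<in> CS A" unfolding CS_def dxy using a b A by auto
      have xc: "x \<in> carrier_vec n" "y \<in> carrier_vec n" using a b A by auto
      have "M *\<^sub>v (x - y) = M *\<^sub>v x - M *\<^sub>v y" using xc M by (simp add: mult_minus_distrib_mat_vec)
      also have "\<dots> = 0\<^sub>v p" using e M xc by simp
      finally have "x - y = 0\<^sub>v n" using inj d by auto
      then show "x = y" using xc by (metis minus_cancel_vec eq_vecI index_minus_vec carrier_vecD index_zero_vec right_minus_eq)
    qed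
    then have "KK.dim = 0" by (rule LM.inj_imp_dim_ker0)
    then show "vec_space.rank p (M*A) = vec_space.rank n A" using rn dimV dimW by linarith
  qed
qed

lemma rank_mono_CS:
  fixes X Y :: "real mat"
  assumes X: "X \<in> carrier_mat n k1" and Y: "Y \<in> carrier_mat n k2" and sub: "CS X \<subseteq> CS Y"
  shows "vec_space.rank n X \<le> vec_space.rank n Y"
proof -
  interpret Vn: vec_space "TYPE(real)" n .
  have cX: "set (cols X) \<subseteq> carrier_vec n" using X cols_dim carrier_matD(1) by blast
  have cY: "set (cols Y) \<subseteq> carrier_vec n" using Y cols_dim carrier_matD(1) by blast
  have sX: "VectorSpace.subspace class_ring (Vn.span (set (cols X))) Vn.V" using Vn.span_is_subspace cX by auto
  have sY: "VectorSpace.subspace class_ring (Vn.span (set (cols Y))) Vn.V" using Vn.span_is_subspace cY by auto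
  have incl: "Vn.span (set (cols X)) \<subseteq> Vn.span (set (cols Y))"
    using sub span_cols_CS[OF X] span_cols_CS[OF Y] by simp
  have nest: "VectorSpace.subspace class_ring (Vn.span (set (cols X))) (Vn.vs (Vn.span (set (cols Y))))"
    by (rule Vn.nested_subspaces[OF sY sX incl])
  interpret VY: vectorspace class_ring "Vn.vs (Vn.span (set (cols Y)))" by (rule Vn.subspace_is_vs[OF sY])
  have fY: "VY.fin_dim" using Vn.fin_dim_span_cols[OF Y] .
  have fX: "vectorspace.fin_dim class_ring (VY.vs (Vn.span (set (cols X))))"
    using Vn.fin_dim_span_cols[OF X] by simp
  have "vectorspace.dim class_ring (VY.vs (Vn.span (set (cols X)))) \<le> VY.dim"
    by (rule VY.subspace_dim[OF nest fY fX])
  then show ?thesis unfolding Vn.rank_def by simp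
qed

lemma quad_zero:
  fixes A :: "real mat"
  assumes A: "A \<in> carrier_mat n r" and d: "\<forall>j<r. d j > 0" and w: "w \<in> carrier_vec n"
    and z: "w \<bullet> ((A * mat_diag r d * transpose_mat A) *\<^sub>v w) = 0"
  shows "transpose_mat A *\<^sub>v w = 0\<^sub>v r"
proof -
  define t where "t = transpose_mat A *\<^sub>v w"
  have t: "t \<in> carrier_vec r" unfolding t_def using A w by auto
  have "(A * mat_diag r d * transpose_mat A) *\<^sub>v w = A *\<^sub>v (mat_diag r d *\<^sub>v t)"
    unfolding t_def using A w by (simp add: assoc_mult_mat_vec[of _ n r] assoc_mult_mat_vec[of A n r "mat_diag r d" r])
  then have "w \<bullet> ((A * mat_diag r d * transpose_mat A) *\<^sub>v w) = t \<bullet> (mat_diag r d *\<^sub>v t)"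
  proof -
    have dt: "mat_diag r d *\<^sub>v t \<in> carrier_vec r" using t mat_diag_dim mult_mat_vec_carrier by blast
    show ?thesis using transpose_vec_mult_scalar[OF A dt w] \<open>_ = A *\<^sub>v _\<close> by (simp add: t_def)
  qed
  also have "\<dots> = (\<Sum>j<r. d j * (t $ j)^2)"
  proof -
    have md: "(mat_diag r d *\<^sub>v t) $ j = d j * t $ j" if j: "j < r" for j
    proof -
      have "(mat_diag r d *\<^sub>v t) $ j = (\<Sum>i\<in>{0..<r}. (if j = i then d i else 0) * t $ i)"
        using j t unfolding mat_diag_def by (simp add: scalar_prod_def row_def)
      also have "\<dots> = (\<Sum>i\<in>{0..<r}. if j = i then d i * t $ i else 0)"
        by (rule sum.cong) auto
      also have "\<dots> = d j * t $ j" using j by (simp add: sum.delta)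
      finally show ?thesis .
    qed
    have "t \<bullet> (mat_diag r d *\<^sub>v t) = (\<Sum>j\<in>{0..<r}. t $ j * (d j * t $ j))"
      using t md unfolding scalar_prod_def by (intro sum.cong) (auto simp: mat_diag_def)
    also have "\<dots> = (\<Sum>j<r. d j * (t $ j)^2)"
      by (simp add: lessThan_atLeast0 power2_eq_square mult.commute mult.left_commute)
    finally show ?thesis .
  qed
  finally have s0: "(\<Sum>j<r. d j * (t $ j)^2) = 0" using z by simp
  have "\<forall>j\<in>{..<r}. d j * (t $ j)^2 = 0"
  proof -
    have "\<And>x. x \<in> {..<r} \<Longrightarrow> 0 \<le> d x * (t $ x)^2" using d by (simp add: less_imp_le)
    then show ?thesis using sum_nonneg_eq_0_iff[of "{..<r}" "\<lambda>j. d j * (t $ j)^2"] s0 by blast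
  qed
  then have "\<forall>j<r. t $ j = 0" using d by (metis lessThan_iff mult_eq_0_iff order_less_irrefl power_eq_0_iff)
  then show ?thesis unfolding t_def[symmetric] using t by (intro eq_vecI) auto
qed

lemma mult_zero_vec_r:
  fixes A :: "real mat"
  assumes "A \<in> carrier_mat n m"
  shows "A *\<^sub>v 0\<^sub>v m = 0\<^sub>v n"
  using assms by (intro eq_vecI) (auto simp: scalar_prod_def)

lemma CS_mult_sub:
  fixes X Y :: "real mat"
  assumes X: "X \<in> carrier_mat n k" and Y: "Y \<in> carrier_mat k l"
  shows "CS (X*Y) \<subseteq> CS X"
proof
  fix v assume "v \<in> CS (X*Y)"
  then obtain x where x: "x \<in> carrier_vec l" "v = (X*Y) *\<^sub>v x" unfolding CS_def using X Y by auto
  then have "v = X *\<^sub>v (Y *\<^sub>v x)" using X Y by simp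
  moreover have "Y *\<^sub>v x \<in> carrier_vec (dim_col X)" using X Y x by simp
  ultimately show "v \<in> CS X" unfolding CS_def by blast
qed

lemma CS_memE:
  assumes "v \<in> CS A"
  obtains x where "x \<in> carrier_vec (dim_col A)" "v = A *\<^sub>v x"
  using assms unfolding CS_def by blast

lemma mat_diag_one: "mat_diag n (\<lambda>_. 1) = (1\<^sub>m n :: real mat)"
  unfolding mat_diag_def by (rule eq_matI) auto

lemma rank_le_transpose:
  fixes A :: "real mat"
  assumes A: "A \<in> carrier_mat n k"
  shows "vec_space.rank n A \<le> vec_space.rank k (transpose_mat A)"
proof -
  have AT: "transpose_mat A \<in> carrier_mat k n" using A by simp
  have "vec_space.rank k (transpose_mat A * A) = vec_space.rank n A"
  proof (subst rank_mult_nullity(2)[OF A AT], intro ballI impI)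
    fix v assume v: "v \<in> CS A" and z: "transpose_mat A *\<^sub>v v = 0\<^sub>v k"
    obtain w where w: "w \<in> carrier_vec k" "v = A *\<^sub>v w" using v A by (auto elim: CS_memE)
    have eq: "transpose_mat A * mat_diag n (\<lambda>_. 1) * transpose_mat (transpose_mat A) = transpose_mat A * A"
      using A by (simp add: mat_diag_one)
    have "w \<bullet> ((transpose_mat A * A) *\<^sub>v w) = 0" using z w A by simp
    then have "transpose_mat (transpose_mat A) *\<^sub>v w = 0\<^sub>v n"
      using quad_zero[OF AT, of "\<lambda>_. 1" w] w eq by simp
    then show "v = 0\<^sub>v n" using w by simp
  qed
  moreover have "vec_space.rank k (transpose_mat A * A) \<le> vec_space.rank k (transpose_mat A)"
    by (rule rank_mono_CS[OF _ AT CS_mult_sub[OF AT A]]) (use A AT in auto)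
  ultimately show ?thesis by simp
qed

lemma rank_laplacian:
  fixes A :: "real mat"
  assumes A: "A \<in> carrier_mat n r" and d: "\<forall>j<r. d j > 0"
  shows "vec_space.rank n (A * mat_diag r d * transpose_mat A) = vec_space.rank n A"
proof (rule antisym)
  have D: "mat_diag r d \<in> carrier_mat r r" by simp
  have AT: "transpose_mat A \<in> carrier_mat r n" using A by simp
  have DAT: "mat_diag r d * transpose_mat A \<in> carrier_mat r n" using mult_carrier_mat[OF D AT] .
  have assoc: "A * mat_diag r d * transpose_mat A = A * (mat_diag r d * transpose_mat A)"
    using assoc_mult_mat[OF A D AT] .
  show "vec_space.rank n (A * mat_diag r d * transpose_mat A) \<le> vec_space.rank n A"
    unfolding assoc by (rule rank_mono_CS[OF mult_carrier_mat[OF A DAT] A CS_mult_sub[OF A DAT]])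
  have r1: "vec_space.rank n (A * (mat_diag r d * transpose_mat A)) = vec_space.rank r (mat_diag r d * transpose_mat A)"
  proof (subst rank_mult_nullity(2)[OF DAT A], intro ballI impI)
    fix v assume v: "v \<in> CS (mat_diag r d * transpose_mat A)" and z: "A *\<^sub>v v = 0\<^sub>v n"
    obtain w where w: "w \<in> carrier_vec n" "v = (mat_diag r d * transpose_mat A) *\<^sub>v w"
      using v DAT by (auto elim: CS_memE)
    have "(A * mat_diag r d * transpose_mat A) *\<^sub>v w = A *\<^sub>v v" unfolding assoc w(2)
      using assoc_mult_mat_vec[OF A DAT w(1)] .
    then have "w \<bullet> ((A * mat_diag r d * transpose_mat A) *\<^sub>v w) = 0" using z w by simp
    then have "transpose_mat A *\<^sub>v w = 0\<^sub>v r" by (rule quad_zero[OF A d w(1)])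
    then show "v = 0\<^sub>v r" unfolding w(2) using assoc_mult_mat_vec[OF D AT w(1)] mult_zero_vec_r[OF D] by simp
  qed
  have r2: "vec_space.rank r (mat_diag r d * transpose_mat A) = vec_space.rank r (transpose_mat A)"
  proof (subst rank_mult_nullity(2)[OF AT D], intro ballI impI)
    fix v assume v: "v \<in> CS (transpose_mat A)" and z: "mat_diag r d *\<^sub>v v = 0\<^sub>v r"
    have vc: "v \<in> carrier_vec r" using v AT by (auto elim: CS_memE)
    show "v = 0\<^sub>v r"
    proof (rule eq_vecI)
      fix j assume "j < dim_vec (0\<^sub>v r)"
      then have j: "j < r" by simp
      have "(mat_diag r d *\<^sub>v v) $ j = (\<Sum>i\<in>{0..<r}. (if j = i then d i else 0) * v $ i)"
        using j vc unfolding mat_diag_def by (simp add: scalar_prod_def row_def)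
      also have "\<dots> = (\<Sum>i\<in>{0..<r}. if j = i then d i * v $ i else 0)"
        by (rule sum.cong) auto
      also have "\<dots> = d j * v $ j" using j by (simp add: sum.delta)
      finally have "d j * v $ j = 0" using z j by simp
      then show "v $ j = 0\<^sub>v r $ j" using d j by (simp, metis less_irrefl)
    qed (use vc in simp)
  qed
  show "vec_space.rank n A \<le> vec_space.rank n (A * mat_diag r d * transpose_mat A)"
    unfolding assoc r1 r2 by (rule rank_le_transpose[OF A])
qed

lemma pick_bij:
  assumes "finite I"
  shows "bij_betw (pick I) {..<card I} I"
proof -
  have inj: "inj_on (pick I) {..<card I}"
  proof (rule inj_onI)
    fix a b assume a: "a \<in> {..<card I}" and b: "b \<in> {..<card I}" and e: "pick I a = pick I b"
    show "a = b"
    proof (rule ccontr)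
      assume "a \<noteq> b"
      then have "a < b \<or> b < a" by auto
      then show False using pick_mono_le[of b I a] pick_mono_le[of a I b] a b e by auto
    qed
  qed
  have sub: "pick I ` {..<card I} \<subseteq> I" using pick_in_set_le by auto
  have "card (pick I ` {..<card I}) = card I" using card_image[OF inj] by simp
  then have "pick I ` {..<card I} = I" using card_subset_eq[OF assms sub] by simp
  then show ?thesis using inj unfolding bij_betw_def by simp
qed

lemma sum_pick:
  assumes "finite I"
  shows "(\<Sum>k<card I. f (pick I k)) = (\<Sum>k\<in>I. f k)"
  using sum.reindex_bij_betw[OF pick_bij[OF assms], of f] .

definition restr :: "nat set \<Rightarrow> real vec \<Rightarrow> real vec" where
  "restr X v = vec (card X) (\<lambda>i. v $ pick X i)"

lemma card_le_set: "X \<subseteq> {0..<n} \<Longrightarrow> {i. i < n \<and> i \<in> X} = X" by auto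

lemma block_mult:
  fixes A :: "real mat"
  assumes A: "A \<in> carrier_mat nr c" and R: "R \<subseteq> {0..<nr}"
    and IJ: "I \<union> J = {0..<c}" "I \<inter> J = {}" and v: "v \<in> carrier_vec c"
  shows "submatrix A R I *\<^sub>v restr I v + submatrix A R J *\<^sub>v restr J v = restr R (A *\<^sub>v v)"
proof -
  have I: "I \<subseteq> {0..<c}" and J: "J \<subseteq> {0..<c}" using IJ by auto
  have fI: "finite I" "finite J" "finite R" using I J R finite_subset[of _ "{0..<_}"] by blast+
  have dR: "card {i. i < dim_row A \<and> i \<in> R} = card R" using A card_le_set[OF R] by simp
  have dI: "card {i. i < dim_col A \<and> i \<in> I} = card I" using A card_le_set[OF I] by simp
  have dJ: "card {i. i < dim_col A \<and> i \<in> J} = card J" using A card_le_set[OF J] by simp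
  show ?thesis
  proof (rule eq_vecI)
    show "dim_vec (submatrix A R I *\<^sub>v restr I v + submatrix A R J *\<^sub>v restr J v) = dim_vec (restr R (A *\<^sub>v v))"
      by (simp add: restr_def dim_submatrix dR)
    fix i assume "i < dim_vec (restr R (A *\<^sub>v v))"
    then have i: "i < card R" by (simp add: restr_def)
    define p where "p = pick R i"
    have pR: "p \<in> R" unfolding p_def using pick_in_set_le[OF i] .
    then have pn: "p < nr" using R by auto
    have s1: "(submatrix A R I *\<^sub>v restr I v) $ i = (\<Sum>k\<in>I. A $$ (p, k) * v $ k)"
    proof -
      have "(submatrix A R I *\<^sub>v restr I v) $ i = (\<Sum>k<card I. A $$ (p, pick I k) * v $ pick I k)"
        using i dR dI unfolding restr_def
        by (simp add: dim_submatrix scalar_prod_def row_def submatrix_index p_def lessThan_atLeast0)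
      also have "\<dots> = (\<Sum>k\<in>I. A $$ (p, k) * v $ k)" by (rule sum_pick[OF fI(1)])
      finally show ?thesis .
    qed
    have s2: "(submatrix A R J *\<^sub>v restr J v) $ i = (\<Sum>k\<in>J. A $$ (p, k) * v $ k)"
    proof -
      have "(submatrix A R J *\<^sub>v restr J v) $ i = (\<Sum>k<card J. A $$ (p, pick J k) * v $ pick J k)"
        using i dR dJ unfolding restr_def
        by (simp add: dim_submatrix scalar_prod_def row_def submatrix_index p_def lessThan_atLeast0)
      also have "\<dots> = (\<Sum>k\<in>J. A $$ (p, k) * v $ k)" by (rule sum_pick[OF fI(2)])
      finally show ?thesis .
    qed
    have "(\<Sum>k\<in>I. A $$ (p, k) * v $ k) + (\<Sum>k\<in>J. A $$ (p, k) * v $ k) = (\<Sum>k\<in>{0..<c}. A $$ (p, k) * v $ k)"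
      using sum.union_disjoint[OF fI(1) fI(2) IJ(2), of "\<lambda>k. A $$ (p,k) * v $ k"] IJ(1) by metis
    also have "\<dots> = (A *\<^sub>v v) $ p" using A v pn by (simp add: scalar_prod_def row_def)
    finally show "(submatrix A R I *\<^sub>v restr I v + submatrix A R J *\<^sub>v restr J v) $ i = restr R (A *\<^sub>v v) $ i"
      using s1 s2 i dR by (simp add: restr_def dim_submatrix p_def)
  qed
qed

lemma pick_upto: "i < m \<Longrightarrow> pick {0..<m} i = i"
proof -
  assume i: "i < m"
  have "card {a \<in> {0..<m}. a < i} = i"
  proof -
    have "{a \<in> {0..<m}. a < i} = {0..<i}" using i by auto
    then show ?thesis by simp
  qed
  then show ?thesis using pick_card_in_set[of i "{0..<m}"] i by simp
qed

lemma restr_carrier[simp]: "restr X v \<in> carrier_vec (card X)"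
  unfolding restr_def by simp

lemma dim_restr[simp]: "dim_vec (restr X v) = card X"
  unfolding restr_def by simp

lemma restr_zero: "finite X \<Longrightarrow> X \<subseteq> {0..<n} \<Longrightarrow> restr X (0\<^sub>v n) = 0\<^sub>v (card X)"
  unfolding restr_def by (intro eq_vecI) (auto dest: pick_in_set_le)

lemma restr_upto: "v \<in> carrier_vec m \<Longrightarrow> restr {0..<m} v = v"
  unfolding restr_def by (intro eq_vecI) (auto simp: pick_upto)

lemma restr_map: "finite X \<Longrightarrow> X \<subseteq> {0..<dim_vec v} \<Longrightarrow> restr X (map_vec f v) = map_vec f (restr X v)"
  unfolding restr_def by (intro eq_vecI) (auto dest: pick_in_set_le)

definition comb :: "nat \<Rightarrow> nat set \<Rightarrow> real vec \<Rightarrow> real vec \<Rightarrow> real vec" where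
  "comb c X w z = vec c (\<lambda>k. if k \<in> X then w $ card {a\<in>X. a < k} else z $ card {a\<in>{0..<c} - X. a < k})"

lemma comb_carrier[simp]: "comb c X w z \<in> carrier_vec c"
  unfolding comb_def by simp

lemma restr_comb1:
  assumes "X \<subseteq> {0..<c}"
  shows "restr X (comb c X w z) = vec (card X) (\<lambda>i. w $ i)"
proof (rule eq_vecI)
  fix i assume "i < dim_vec (vec (card X) (\<lambda>i. w $ i))"
  then have i: "i < card X" by simp
  have p: "pick X i \<in> X" using pick_in_set_le[OF i] .
  then have "pick X i < c" using assms by auto
  then show "restr X (comb c X w z) $ i = vec (card X) (\<lambda>i. w $ i) $ i"
    unfolding restr_def comb_def using i p card_pick_le[OF i] by simp
qed (simp add: restr_def)

lemma restr_comb2: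
  assumes "X \<subseteq> {0..<c}" and Y: "Y = {0..<c} - X"
  shows "restr Y (comb c X w z) = vec (card Y) (\<lambda>i. z $ i)"
proof (rule eq_vecI)
  fix i assume "i < dim_vec (vec (card Y) (\<lambda>i. z $ i))"
  then have i: "i < card Y" by simp
  have p: "pick Y i \<in> Y" using pick_in_set_le[OF i] .
  then have "pick Y i < c" "pick Y i \<notin> X" using Y by auto
  then show "restr Y (comb c X w z) $ i = vec (card Y) (\<lambda>i. z $ i) $ i"
    unfolding restr_def comb_def using i p card_pick_le[OF i] Y by simp
qed (simp add: restr_def)

lemma vec_idem: "w \<in> carrier_vec n \<Longrightarrow> vec n (\<lambda>i. w $ i) = w"
  by (intro eq_vecI) auto

lemma transpose_sub_restr:
  fixes Z :: "real mat"
  assumes Z: "Z \<in> carrier_mat m c" and X: "X \<subseteq> {0..<c}" and mu: "mu \<in> carrier_vec m"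
  shows "transpose_mat (submatrix Z {0..<m} X) *\<^sub>v mu = restr X (transpose_mat Z *\<^sub>v mu)"
proof -
  have dr: "card {i. i < dim_row Z \<and> i \<in> {0..<m}} = m" using Z by (simp add: card_le_set)
  have dc: "card {i. i < dim_col Z \<and> i \<in> X} = card X" using Z card_le_set[OF X] by simp
  show ?thesis
  proof (rule eq_vecI)
    show "dim_vec (transpose_mat (submatrix Z {0..<m} X) *\<^sub>v mu) = dim_vec (restr X (transpose_mat Z *\<^sub>v mu))"
      using dc by (simp add: dim_submatrix)
    fix i assume "i < dim_vec (restr X (transpose_mat Z *\<^sub>v mu))"
    then have i: "i < card X" by simp
    have p: "pick X i < c" using pick_in_set_le[OF i] X by auto
    show "(transpose_mat (submatrix Z {0..<m} X) *\<^sub>v mu) $ i = restr X (transpose_mat Z *\<^sub>v mu) $ i"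
      using i p dr dc Z mu
      by (simp add: dim_submatrix restr_def scalar_prod_def submatrix_index pick_upto)
  qed
qed

lemma mat_diag_mult_vec_index:
  assumes j: "j < r" and s: "s \<in> carrier_vec r"
  shows "(mat_diag r d *\<^sub>v s) $ j = d j * s $ (j::nat)"
proof -
  have "(mat_diag r d *\<^sub>v s) $ j = (\<Sum>i\<in>{0..<r}. (if j = i then d i else 0) * s $ i)"
    using j s unfolding mat_diag_def by (simp add: scalar_prod_def row_def)
  also have "\<dots> = (\<Sum>i\<in>{0..<r}. if j = i then d i * s $ i else 0)"
    by (rule sum.cong) auto
  also have "\<dots> = d j * s $ j" using j by (simp add: sum.delta)
  finally show ?thesis .
qed

lemma incidence_carrier[simp]: "incidence_mat c r S P \<in> carrier_mat c r"
  unfolding incidence_mat_def by simp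

lemma incidence_transpose_index:
  assumes j: "j < r" and SP: "S j < c" "P j < c" and u: "u \<in> carrier_vec c"
  shows "(transpose_mat (incidence_mat c r S P) *\<^sub>v u) $ j = u $ P j - u $ S j"
proof -
  have "(transpose_mat (incidence_mat c r S P) *\<^sub>v u) $ j
      = (\<Sum>i\<in>{0..<c}. ((if i = P j then 1 else 0) - (if i = S j then 1 else 0)) * u $ i)"
    using j u unfolding incidence_mat_def by (simp add: scalar_prod_def)
  also have "\<dots> = (\<Sum>i\<in>{0..<c}. (if P j = i then u $ i else 0) - (if S j = i then u $ i else 0))"
    by (rule sum.cong) auto
  also have "\<dots> = (\<Sum>i\<in>{0..<c}. (if P j = i then u $ i else 0)) - (\<Sum>i\<in>{0..<c}. (if S j = i then u $ i else 0))"
    by (rule sum_subtractf)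
  also have "\<dots> = u $ P j - u $ S j" using SP by (simp add: sum.delta)
  finally show ?thesis .
qed

lemma exp_mono_prod:
  fixes a b :: real
  shows "(a - b) * (exp a - exp b) \<ge> 0" and "(a - b) * (exp a - exp b) = 0 \<Longrightarrow> a = b"
proof -
  have "a < b \<Longrightarrow> (a - b) * (exp a - exp b) > 0" by (simp add: mult_neg_neg)
  moreover have "b < a \<Longrightarrow> (a - b) * (exp a - exp b) > 0" by simp
  ultimately show "(a - b) * (exp a - exp b) \<ge> 0" "(a - b) * (exp a - exp b) = 0 \<Longrightarrow> a = b"
    by (metis less_irrefl linorder_neqE_linordered_idom order_le_less right_minus_eq mult_zero_left)+
qed

theorem proposition8:
  fixes m c r :: nat
    and Z :: "real mat"
    and S P :: "nat \<Rightarrow> nat"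
    and kf kr :: "nat \<Rightarrow> real"
    and xs :: "real vec"
    and Vr :: "nat set"
    and L22inv :: "real mat"
    and rh :: nat and Sh Ph :: "nat \<Rightarrow> nat" and \<kappa>h :: "nat \<Rightarrow> real"
  defines "B \<equiv> incidence_mat c r S P"
  defines "\<kappa> \<equiv> \<lambda>j. kf j * exp (col Z (S j) \<bullet> Ln_vec xs)"
  defines "L \<equiv> B * mat_diag r \<kappa> * transpose_mat B"
  defines "V1 \<equiv> {0..<c} - Vr"
  defines "L11 \<equiv> submatrix L V1 V1" and "L12 \<equiv> submatrix L V1 Vr"
      and "L21 \<equiv> submatrix L Vr V1" and "L22 \<equiv> submatrix L Vr Vr"
  defines "Zh \<equiv> submatrix Z {0..<m} V1"
  defines "Bh \<equiv> incidence_mat (card V1) rh Sh Ph"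
  assumes Z: "Z \<in> carrier_mat m c" "\<forall>i<m. \<forall>j<c. Z $$ (i,j) \<in> \<nat>"
    and SP: "\<forall>j<r. S j < c \<and> P j < c"
    and k_pos: "\<forall>j<r. kf j > 0 \<and> kr j > 0"
    and xs_pos: "pos_vec m xs"
    and thermo_eq: "\<forall>j<r. mass_action_rate Z S P kf kr xs j = 0"
    and Vr: "Vr \<subseteq> {0..<c}"
    and L22inv: "L22inv \<in> carrier_mat (card Vr) (card Vr)"
      "L22 * L22inv = 1\<^sub>m (card Vr)" "L22inv * L22 = 1\<^sub>m (card Vr)"
    and red_graph: "\<forall>j<rh. Sh j < card V1 \<and> Ph j < card V1"
    and red_weights: "\<forall>j<rh. \<kappa>h j > 0"
    and schur: "L11 - L12 * L22inv * L21 = Bh * mat_diag rh \<kappa>h * transpose_mat Bh"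
  shows "equilibria m Z B \<kappa> xs \<subseteq> equilibria m Zh Bh \<kappa>h xs
     \<and> (deficiency Z B = 0 \<longrightarrow> deficiency Zh Bh = 0)"
proof -
  define D where "D = mat_diag r \<kappa>"
  define q where "q = card V1"
  define s where "s = card Vr"
  define Z2 where "Z2 = submatrix Z {0..<m} Vr"
  define Lh where "Lh = Bh * mat_diag rh \<kappa>h * transpose_mat Bh"
  have Bc: "B \<in> carrier_mat c r" unfolding B_def by simp
  have Dc: "D \<in> carrier_mat r r" unfolding D_def by simp
  have BTc: "transpose_mat B \<in> carrier_mat r c" using Bc by simp
  have Lc: "L \<in> carrier_mat c c" unfolding L_def D_def[symmetric] using mult_carrier_mat[OF mult_carrier_mat[OF Bc Dc] BTc] .
  have LBD: "L = B * (D * transpose_mat B)" unfolding L_def D_def[symmetric] using assoc_mult_mat[OF Bc Dc BTc] .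
  have V1sub: "V1 \<subseteq> {0..<c}" unfolding V1_def by auto
  have IJ: "V1 \<union> Vr = {0..<c}" "V1 \<inter> Vr = {}" using Vr unfolding V1_def by auto
  have IJ': "Vr \<union> V1 = {0..<c}" "Vr \<inter> V1 = {}" using IJ by auto
  have Vr_eq: "Vr = {0..<c} - V1" using Vr unfolding V1_def by auto
  have fin: "finite V1" "finite Vr" using V1sub Vr finite_subset[of _ "{0..<c}"] by blast+
  have cV1: "card {i. i < c \<and> i \<in> V1} = q" unfolding q_def using card_le_set[OF V1sub] by simp
  have cVr: "card {i. i < c \<and> i \<in> Vr} = s" unfolding s_def using card_le_set[OF Vr] by simp
  have cm: "card {i. i < m \<and> i \<in> {0..<m}} = m" by (simp add: card_le_set)
  have dL: "dim_row L = c" "dim_col L = c" using Lc by auto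
  have dZ: "dim_row Z = m" "dim_col Z = c" using Z(1) by auto
  have L11c: "L11 \<in> carrier_mat q q" unfolding L11_def
    by (rule carrier_matI) (simp_all only: dim_submatrix dL cV1)
  have L12c: "L12 \<in> carrier_mat q s" unfolding L12_def
    by (rule carrier_matI) (simp_all only: dim_submatrix dL cV1 cVr)
  have L21c: "L21 \<in> carrier_mat s q" unfolding L21_def
    by (rule carrier_matI) (simp_all only: dim_submatrix dL cV1 cVr)
  have L22c: "L22 \<in> carrier_mat s s" unfolding L22_def
    by (rule carrier_matI) (simp_all only: dim_submatrix dL cVr)
  have Invc: "L22inv \<in> carrier_mat s s" using L22inv(1) unfolding s_def .
  have Zhc: "Zh \<in> carrier_mat m q" unfolding Zh_def
    by (rule carrier_matI) (simp_all only: dim_submatrix dZ cV1 cm)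
  have Z2c: "Z2 \<in> carrier_mat m s" unfolding Z2_def
    by (rule carrier_matI) (simp_all only: dim_submatrix dZ cVr cm)
  have Bhc: "Bh \<in> carrier_mat q rh" unfolding Bh_def q_def by simp
  have Lhc: "Lh \<in> carrier_mat q q" unfolding Lh_def
    using mult_carrier_mat[OF mult_carrier_mat[OF Bhc mat_diag_dim] transpose_carrier_mat[THEN iffD2, OF Bhc]] .
  have kpos: "\<forall>j<r. \<kappa> j > 0" unfolding \<kappa>_def using k_pos by simp
  have blk1: "L11 *\<^sub>v restr V1 y + L12 *\<^sub>v restr Vr y = restr V1 (L *\<^sub>v y)" if y: "y \<in> carrier_vec c" for y
    unfolding L11_def L12_def by (rule block_mult[OF Lc V1sub IJ y])
  have blk2: "L21 *\<^sub>v restr V1 y + L22 *\<^sub>v restr Vr y = restr Vr (L *\<^sub>v y)" if y: "y \<in> carrier_vec c" for y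
    unfolding L21_def L22_def by (rule block_mult[OF Lc Vr IJ y])
  have blkZ: "Zh *\<^sub>v restr V1 u + Z2 *\<^sub>v restr Vr u = Z *\<^sub>v u" if u: "u \<in> carrier_vec c" for u
  proof -
    have "Zh *\<^sub>v restr V1 u + Z2 *\<^sub>v restr Vr u = restr {0..<m} (Z *\<^sub>v u)"
      unfolding Zh_def Z2_def by (rule block_mult[OF Z(1) _ IJ u]) auto
    also have "\<dots> = Z *\<^sub>v u" using Z(1) u by (intro restr_upto) simp
    finally show ?thesis .
  qed
  have schurv: "Lh *\<^sub>v w = L11 *\<^sub>v w - L12 *\<^sub>v (L22inv *\<^sub>v (L21 *\<^sub>v w))" if w: "w \<in> carrier_vec q" for w
  proof -
    have "Lh = L11 - L12 * L22inv * L21" unfolding Lh_def using schur by simp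
    then have "Lh *\<^sub>v w = L11 *\<^sub>v w - (L12 * L22inv * L21) *\<^sub>v w"
      using minus_mult_distrib_mat_vec[OF L11c _ w, of "L12 * L22inv * L21"] L12c Invc L21c
      by (metis mult_carrier_mat)
    also have "(L12 * L22inv * L21) *\<^sub>v w = L12 *\<^sub>v (L22inv *\<^sub>v (L21 *\<^sub>v w))"
    proof -
      have "(L12 * L22inv * L21) *\<^sub>v w = (L12 * L22inv) *\<^sub>v (L21 *\<^sub>v w)"
        using assoc_mult_mat_vec[OF mult_carrier_mat[OF L12c Invc] L21c w] .
      also have "\<dots> = L12 *\<^sub>v (L22inv *\<^sub>v (L21 *\<^sub>v w))"
        using assoc_mult_mat_vec[OF L12c Invc mult_mat_vec_carrier[OF L21c w]] .
      finally show ?thesis .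
    qed
    finally show ?thesis .
  qed
  have inv_app: "L22inv *\<^sub>v (L22 *\<^sub>v v) = v" if v: "v \<in> carrier_vec s" for v
    using assoc_mult_mat_vec[OF Invc L22c v, symmetric] L22inv(3) v unfolding s_def by simp
  have app_inv: "L22 *\<^sub>v (L22inv *\<^sub>v v) = v" if v: "v \<in> carrier_vec s" for v
    using assoc_mult_mat_vec[OF L22c Invc v, symmetric] L22inv(2) v unfolding s_def by simp
  have red: "Lh *\<^sub>v restr V1 y = restr V1 (L *\<^sub>v y)" if y: "y \<in> carrier_vec c" and z: "restr Vr (L *\<^sub>v y) = 0\<^sub>v s" for y
  proof -
    define y1 where "y1 = restr V1 y"
    define y2 where "y2 = restr Vr y"
    have y1c: "y1 \<in> carrier_vec q" unfolding y1_def q_def by simp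
    have y2c: "y2 \<in> carrier_vec s" unfolding y2_def s_def by simp
    define g where "g = L22inv *\<^sub>v (L21 *\<^sub>v y1)"
    have gc: "g \<in> carrier_vec s" unfolding g_def using Invc L21c y1c by simp
    have e2: "L21 *\<^sub>v y1 + L22 *\<^sub>v y2 = 0\<^sub>v s" using blk2[OF y] z unfolding y1_def y2_def by simp
    have "L22inv *\<^sub>v (L21 *\<^sub>v y1 + L22 *\<^sub>v y2) = g + y2"
      unfolding g_def using mult_add_distrib_mat_vec[OF Invc, of "L21 *\<^sub>v y1" "L22 *\<^sub>v y2"] L21c L22c y1c y2c inv_app[OF y2c]
      by simp
    then have gy: "g + y2 = 0\<^sub>v s" using e2 mult_zero_vec_r[OF Invc] by simp
    have "L12 *\<^sub>v (g + y2) = L12 *\<^sub>v g + L12 *\<^sub>v y2" using mult_add_distrib_mat_vec[OF L12c gc y2c] .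
    then have e3: "L12 *\<^sub>v g + L12 *\<^sub>v y2 = 0\<^sub>v q" using gy mult_zero_vec_r[OF L12c] by simp
    have e1: "L11 *\<^sub>v y1 + L12 *\<^sub>v y2 = restr V1 (L *\<^sub>v y)" using blk1[OF y] unfolding y1_def y2_def .
    have sv: "Lh *\<^sub>v y1 = L11 *\<^sub>v y1 - L12 *\<^sub>v g" unfolding g_def by (rule schurv[OF y1c])
    show ?thesis unfolding y1_def[symmetric]
    proof (rule eq_vecI)
      fix i assume "i < dim_vec (restr V1 (L *\<^sub>v y))"
      then have i: "i < q" unfolding q_def by simp
      have a: "(L12 *\<^sub>v g) $ i + (L12 *\<^sub>v y2) $ i = 0" using arg_cong[OF e3, of "\<lambda>v. v $ i"] i L12c by simp
      have b: "(L11 *\<^sub>v y1) $ i + (L12 *\<^sub>v y2) $ i = restr V1 (L *\<^sub>v y) $ i"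
        using arg_cong[OF e1, of "\<lambda>v. v $ i"] i L12c by simp
      have "(Lh *\<^sub>v y1) $ i = (L11 *\<^sub>v y1) $ i - (L12 *\<^sub>v g) $ i" using sv i L11c L12c by simp
      then show "(Lh *\<^sub>v y1) $ i = restr V1 (L *\<^sub>v y) $ i" using a b by simp
    qed (use Lhc in \<open>simp add: q_def\<close>)
  qed
  have Dhc: "mat_diag rh \<kappa>h \<in> carrier_mat rh rh" by simp
  have BhTc: "transpose_mat Bh \<in> carrier_mat rh q" using Bhc by simp
  have part1: "equilibria m Z B \<kappa> xs \<subseteq> equilibria m Zh Bh \<kappa>h xs"
  proof
    fix x assume xe: "x \<in> equilibria m Z B \<kappa> xs"
    have px: "pos_vec m x" and rhs: "balanced_rhs Z B \<kappa> xs x = 0\<^sub>v m" using xe unfolding equilibria_def by auto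
    have xdim: "dim_vec x = m" using px unfolding pos_vec_def by auto
    define mu where "mu = Ln_vec (vec_quot x xs)"
    have muc: "mu \<in> carrier_vec m" unfolding mu_def Ln_vec_def vec_quot_def using xdim by simp
    define u where "u = transpose_mat Z *\<^sub>v mu"
    have uc: "u \<in> carrier_vec c" unfolding u_def using Z(1) muc by simp
    define y where "y = Exp_vec u"
    have yc: "y \<in> carrier_vec c" unfolding y_def Exp_vec_def using uc by simp
    have yi: "y $ i = exp (u $ i)" if "i < c" for i unfolding y_def Exp_vec_def using uc that by simp
    have dB: "dim_col B = r" using Bc by simp
    have ZL: "Z * B * mat_diag (dim_col B) \<kappa> * transpose_mat B = Z * L"
    proof -
      have "Z * B * D * transpose_mat B = Z * (B * D) * transpose_mat B"
        using assoc_mult_mat[OF Z(1) Bc Dc] by simp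
      also have "\<dots> = Z * (B * D * transpose_mat B)"
        using assoc_mult_mat[OF Z(1) mult_carrier_mat[OF Bc Dc] BTc] .
      finally show ?thesis unfolding dB D_def L_def .
    qed
    have ZLc: "Z * L \<in> carrier_mat m c" using mult_carrier_mat[OF Z(1) Lc] .
    have "- (Z * L) *\<^sub>v y = 0\<^sub>v m" using rhs unfolding balanced_rhs_def ZL mu_def[symmetric] u_def[symmetric] y_def[symmetric] .
    moreover have "- (Z * L) *\<^sub>v y = - ((Z * L) *\<^sub>v y)" using ZLc yc dL by (intro uminus_mult_mat_vec) simp
    ultimately have "- ((Z * L) *\<^sub>v y) = 0\<^sub>v m" by simp
    then have "(Z * L) *\<^sub>v y = 0\<^sub>v m" using uminus_zero_vec_eq[of "(Z * L) *\<^sub>v y" m] ZLc yc by simp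
    then have ZLy: "Z *\<^sub>v (L *\<^sub>v y) = 0\<^sub>v m" using assoc_mult_mat_vec[OF Z(1) Lc yc] by simp
    have Lyc: "L *\<^sub>v y \<in> carrier_vec c" using Lc yc by simp
    have uLy: "u \<bullet> (L *\<^sub>v y) = 0"
      unfolding u_def using transpose_vec_mult_scalar[OF Z(1) Lyc muc] ZLy muc by simp
    define t where "t = transpose_mat B *\<^sub>v u"
    define sv where "sv = transpose_mat B *\<^sub>v y"
    have tc: "t \<in> carrier_vec r" unfolding t_def using BTc uc by simp
    have svc: "sv \<in> carrier_vec r" unfolding sv_def using BTc yc by simp
    have Dsvc: "D *\<^sub>v sv \<in> carrier_vec r" using Dc svc by simp
    have Ly: "L *\<^sub>v y = B *\<^sub>v (D *\<^sub>v sv)"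
    proof -
      have "L *\<^sub>v y = B *\<^sub>v ((D * transpose_mat B) *\<^sub>v y)"
        unfolding LBD using assoc_mult_mat_vec[OF Bc mult_carrier_mat[OF Dc BTc] yc] .
      also have "(D * transpose_mat B) *\<^sub>v y = D *\<^sub>v sv"
        unfolding sv_def using assoc_mult_mat_vec[OF Dc BTc yc] .
      finally show ?thesis .
    qed
    have "t \<bullet> (D *\<^sub>v sv) = 0"
      unfolding t_def using transpose_vec_mult_scalar[OF Bc Dsvc uc] uLy Ly by simp
    moreover have "t \<bullet> (D *\<^sub>v sv) = (\<Sum>j\<in>{0..<r}. \<kappa> j * ((u $ P j - u $ S j) * (exp (u $ P j) - exp (u $ S j))))"
    proof -
      have "t \<bullet> (D *\<^sub>v sv) = (\<Sum>j\<in>{0..<r}. t $ j * (D *\<^sub>v sv) $ j)"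
        using Dsvc Dc unfolding scalar_prod_def by (simp del: index_mult_mat_vec)
      also have "\<dots> = (\<Sum>j\<in>{0..<r}. \<kappa> j * ((u $ P j - u $ S j) * (exp (u $ P j) - exp (u $ S j))))"
      proof (rule sum.cong)
        fix j assume "j \<in> {0..<r}"
        then have j: "j < r" by simp
        have tj: "t $ j = u $ P j - u $ S j"
          unfolding t_def B_def using incidence_transpose_index[OF j _ _ uc] SP j by simp
        have sj: "sv $ j = exp (u $ P j) - exp (u $ S j)"
          unfolding sv_def B_def using incidence_transpose_index[OF j _ _ yc] SP j yi by simp
        show "t $ j * (D *\<^sub>v sv) $ j = \<kappa> j * ((u $ P j - u $ S j) * (exp (u $ P j) - exp (u $ S j)))"
          unfolding D_def using mat_diag_mult_vec_index[OF j svc] tj sj by simp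
      qed simp
      finally show ?thesis .
    qed
    ultimately have s0: "(\<Sum>j\<in>{0..<r}. \<kappa> j * ((u $ P j - u $ S j) * (exp (u $ P j) - exp (u $ S j)))) = 0" by simp
    have nn: "\<And>j. j \<in> {0..<r} \<Longrightarrow> 0 \<le> \<kappa> j * ((u $ P j - u $ S j) * (exp (u $ P j) - exp (u $ S j)))"
      using kpos exp_mono_prod(1) by (simp add: less_imp_le)
    have each: "\<kappa> j * ((u $ P j - u $ S j) * (exp (u $ P j) - exp (u $ S j))) = 0" if "j < r" for j
      using sum_nonneg_eq_0_iff[of "{0..<r}", OF _ nn] s0 that by simp
    have sv0: "sv = 0\<^sub>v r"
    proof (rule eq_vecI)
      fix j assume "j < dim_vec (0\<^sub>v r)"
      then have j: "j < r" by simp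
      have kne: "\<kappa> j \<noteq> 0" using kpos j by force
      have "(u $ P j - u $ S j) * (exp (u $ P j) - exp (u $ S j)) = 0" using each[OF j] kne mult_eq_0_iff by metis
      then have "u $ P j = u $ S j" by (rule exp_mono_prod(2))
      then show "sv $ j = 0\<^sub>v r $ j"
        unfolding sv_def B_def using incidence_transpose_index[OF j _ _ yc] SP j yi by simp
    qed (use svc in simp)
    have Ly0: "L *\<^sub>v y = 0\<^sub>v c" unfolding Ly sv0 using mult_zero_vec_r[OF Dc] mult_zero_vec_r[OF Bc] by simp
    have z: "restr Vr (L *\<^sub>v y) = 0\<^sub>v s" unfolding Ly0 s_def using restr_zero[OF fin(2) Vr] .
    have Lh0: "Lh *\<^sub>v restr V1 y = 0\<^sub>v q" using red[OF yc z] unfolding Ly0 q_def using restr_zero[OF fin(1) V1sub] by simp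
    have ey: "Exp_vec (transpose_mat Zh *\<^sub>v Ln_vec (vec_quot x xs)) = restr V1 y"
      unfolding mu_def[symmetric] Zh_def transpose_sub_restr[OF Z(1) V1sub muc] u_def[symmetric] y_def Exp_vec_def
      using restr_map[OF fin(1), of u exp] V1sub uc by simp
    have dBh: "dim_col Bh = rh" using Bhc by simp
    have ZLh: "Zh * Bh * mat_diag (dim_col Bh) \<kappa>h * transpose_mat Bh = Zh * Lh"
    proof -
      have "Zh * Bh * mat_diag rh \<kappa>h * transpose_mat Bh = Zh * (Bh * mat_diag rh \<kappa>h) * transpose_mat Bh"
        using assoc_mult_mat[OF Zhc Bhc Dhc] by simp
      also have "\<dots> = Zh * (Bh * mat_diag rh \<kappa>h * transpose_mat Bh)"
        using assoc_mult_mat[OF Zhc mult_carrier_mat[OF Bhc Dhc] BhTc] .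
      finally show ?thesis unfolding dBh Lh_def .
    qed
    have y1c: "restr V1 y \<in> carrier_vec q" unfolding q_def by simp
    have ZLhc: "Zh * Lh \<in> carrier_mat m q" using mult_carrier_mat[OF Zhc Lhc] .
    have dimeq: "dim_vec (restr V1 y) = dim_col (Zh * Lh)"
      using carrier_vecD[OF y1c] carrier_matD(2)[OF ZLhc] by simp
    have "balanced_rhs Zh Bh \<kappa>h xs x = - (Zh * Lh) *\<^sub>v restr V1 y"
      unfolding balanced_rhs_def ZLh ey ..
    also have "\<dots> = - ((Zh * Lh) *\<^sub>v restr V1 y)" by (rule uminus_mult_mat_vec[OF dimeq])
    also have "(Zh * Lh) *\<^sub>v restr V1 y = 0\<^sub>v m"
      using assoc_mult_mat_vec[OF Zhc Lhc y1c] Lh0 mult_zero_vec_r[OF Zhc] by simp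
    finally have "balanced_rhs Zh Bh \<kappa>h xs x = 0\<^sub>v m" by simp
    then show "x \<in> equilibria m Zh Bh \<kappa>h xs" unfolding equilibria_def using px by simp
  qed
  have part2: "deficiency Z B = 0 \<longrightarrow> deficiency Zh Bh = 0"
  proof
    assume "deficiency Z B = 0"
    then have "vec_space.rank m (Z * B) = vec_space.rank c B"
      unfolding deficiency_def mat_rank_def using Bc Z(1) by simp
    then have injB: "\<forall>v\<in>CS B. Z *\<^sub>v v = 0\<^sub>v m \<longrightarrow> v = 0\<^sub>v c"
      using rank_mult_nullity(2)[OF Bc Z(1)] by simp
    have injLh: "\<forall>v\<in>CS Lh. Zh *\<^sub>v v = 0\<^sub>v m \<longrightarrow> v = 0\<^sub>v q"
    proof (intro ballI impI)
      fix v assume v: "v \<in> CS Lh" and zv: "Zh *\<^sub>v v = 0\<^sub>v m"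
      obtain w where wc: "w \<in> carrier_vec q" and vw: "v = Lh *\<^sub>v w" using v Lhc by (auto elim: CS_memE)
      define zz where "zz = L22inv *\<^sub>v (- (L21 *\<^sub>v w))"
      have zzc: "zz \<in> carrier_vec s" unfolding zz_def using Invc L21c wc by simp
      define y where "y = comb c V1 w zz"
      have yc: "y \<in> carrier_vec c" unfolding y_def by simp
      have r1: "restr V1 y = w" unfolding y_def restr_comb1[OF V1sub] using vec_idem[OF wc] unfolding q_def .
      have r2: "restr Vr y = zz" unfolding y_def restr_comb2[OF V1sub Vr_eq] using vec_idem[OF zzc] unfolding s_def .
      have L22zz: "L22 *\<^sub>v zz = - (L21 *\<^sub>v w)" unfolding zz_def using app_inv L21c wc by simp
      have z: "restr Vr (L *\<^sub>v y) = 0\<^sub>v s"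
      proof -
        have "restr Vr (L *\<^sub>v y) = L21 *\<^sub>v w + - (L21 *\<^sub>v w)" using blk2[OF yc] r1 r2 L22zz by simp
        also have "\<dots> = 0\<^sub>v s" using L21c wc by (intro eq_vecI) auto
        finally show ?thesis .
      qed
      have vL: "v = restr V1 (L *\<^sub>v y)" using red[OF yc z] r1 vw by simp
      have "Z *\<^sub>v (L *\<^sub>v y) = Zh *\<^sub>v v + Z2 *\<^sub>v 0\<^sub>v s"
        using blkZ[of "L *\<^sub>v y"] Lc yc vL z by simp
      also have "\<dots> = 0\<^sub>v m" using zv mult_zero_vec_r[OF Z2c] by simp
      finally have ZLy: "Z *\<^sub>v (L *\<^sub>v y) = 0\<^sub>v m" .
      have "L *\<^sub>v y \<in> CS B"
      proof -
        have "L *\<^sub>v y = B *\<^sub>v ((D * transpose_mat B) *\<^sub>v y)"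
          unfolding LBD using assoc_mult_mat_vec[OF Bc mult_carrier_mat[OF Dc BTc] yc] .
        moreover have "(D * transpose_mat B) *\<^sub>v y \<in> carrier_vec (dim_col B)" using Dc BTc yc Bc by simp
        ultimately show ?thesis unfolding CS_def by blast
      qed
      then have "L *\<^sub>v y = 0\<^sub>v c" using injB ZLy by blast
      then show "v = 0\<^sub>v q" using vL restr_zero[OF fin(1) V1sub] unfolding q_def by simp
    qed
    have a: "vec_space.rank m (Zh * Lh) = vec_space.rank q Lh"
      using rank_mult_nullity(2)[OF Lhc Zhc] injLh by simp
    have b: "vec_space.rank q Lh = vec_space.rank q Bh"
      unfolding Lh_def by (rule rank_laplacian[OF Bhc red_weights])
    have ZhBhc: "Zh * Bh \<in> carrier_mat m rh" using mult_carrier_mat[OF Zhc Bhc] .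
    have DBTc: "mat_diag rh \<kappa>h * transpose_mat Bh \<in> carrier_mat rh q" using mult_carrier_mat[OF Dhc BhTc] .
    have eqm: "Zh * Lh = (Zh * Bh) * (mat_diag rh \<kappa>h * transpose_mat Bh)"
    proof -
      have "Lh = Bh * (mat_diag rh \<kappa>h * transpose_mat Bh)" unfolding Lh_def using assoc_mult_mat[OF Bhc Dhc BhTc] .
      then have "Zh * Lh = Zh * (Bh * (mat_diag rh \<kappa>h * transpose_mat Bh))" by simp
      also have "\<dots> = (Zh * Bh) * (mat_diag rh \<kappa>h * transpose_mat Bh)" using assoc_mult_mat[OF Zhc Bhc DBTc] by simp
      finally show ?thesis .
    qed
    have c1: "vec_space.rank m (Zh * Lh) \<le> vec_space.rank m (Zh * Bh)"
      unfolding eqm by (rule rank_mono_CS[OF mult_carrier_mat[OF ZhBhc DBTc] ZhBhc CS_mult_sub[OF ZhBhc DBTc]])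
    have d: "vec_space.rank m (Zh * Bh) \<le> vec_space.rank q Bh" by (rule rank_mult_nullity(1)[OF Bhc Zhc])
    have "vec_space.rank m (Zh * Bh) = vec_space.rank q Bh" using a b c1 d by linarith
    moreover have "dim_row Bh = q" "dim_row (Zh * Bh) = m" using Bhc Zhc by auto
    ultimately show "deficiency Zh Bh = 0" unfolding deficiency_def mat_rank_def by simp
  qed
  show ?thesis using part1 part2 by blast
qed

end
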